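(* For $N$ a positive integer let $J_N$ be the number of vectors $(\delta_0,\ldots,\delta_N)\in\{-1,1\}^{N+1}$ with $\sum_{i=0}^N\delta_i\binom{N}{i}=0$. Then for $N=2^n$ with $n\ge 3$ sufficiently large, $$J_{2^n}\le 0.3258\cdot 2^{3\cdot 2^{n-2}-\frac{n-3}{2}}.$$ *)

theory Defs
  imports Complex_Main
begin

definition J :: "nat \<Rightarrow> nat" where
  "J N = card {ds :: int list. length ds = N + 1 \<and> set ds \<subseteq> {-1, 1} \<and>
              (\<Sum>i\<le>N. ds ! i * int (N choose i)) = 0}"

end

theory Submission
  imports Defs
begin

lemma binom_step: "Suc k * (N choose Suc k) = (N - k) * (N choose k)"
  using times_binomial_minus1_eq[of "Suc k" N] binomial_absorb_comp[of N k] by simp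

lemma binom_double:
  assumes "3 * i + 2 \<le> N"
  shows "2 * (N choose i) \<le> (N choose Suc i)"
proof -
  have "Suc i * 2 \<le> N - i" using assms by simp
  then have "(Suc i * 2) * (N choose i) \<le> (N - i) * (N choose i)"
    by (rule mult_right_mono) simp
  then have "Suc i * (2 * (N choose i)) \<le> (N - i) * (N choose i)"
    by (simp add: mult.assoc)
  also have "\<dots> = Suc i * (N choose Suc i)" by (rule binom_step[symmetric])
  finally show ?thesis by (subst (asm) mult_le_cancel1) simp
qed

lemma binom_sum_lt:
  assumes "3 * i + 2 \<le> N"
  shows "(\<Sum>j\<le>i. N choose j) < 2 * (N choose i)"
  using assms
proof (induction i)
  case 0
  then show ?case by simp
next
  case (Suc i)
  then have "(\<Sum>j\<le>i. N choose j) < 2 * (N choose i)" by simp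
  moreover have "2 * (N choose i) \<le> (N choose Suc i)"
    using Suc.prems by (intro binom_double) simp
  ultimately show ?case by simp
qed

lemma superinc:
  assumes "3 * i + 2 \<le> N"
  shows "(\<Sum>j\<le>i. int (N choose j)) < int (N choose Suc i)"
proof -
  have "(\<Sum>j\<le>i. N choose j) < (N choose Suc i)"
    using binom_sum_lt[OF assms] binom_double[OF assms] by simp
  then show ?thesis by (simp flip: of_nat_sum)
qed

lemma cancel:
  fixes w d :: "nat \<Rightarrow> int"
  assumes w0: "w 0 > 0" and wnn: "\<And>j. w j \<ge> 0"
    and sup: "\<And>i. i < k \<Longrightarrow> (\<Sum>j\<le>i. w j) < w (Suc i)"
    and d: "\<And>j. j \<le> k \<Longrightarrow> d j \<in> {-2, 0, 2}"
    and s: "(\<Sum>j\<le>k. d j * w j) = 0"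
  shows "\<forall>j\<le>k. d j = 0"
  using sup d s
proof (induction k)
  case 0
  then show ?case using w0 by simp
next
  case (Suc k)
  have bnd: "\<bar>\<Sum>j\<le>k. d j * w j\<bar> \<le> 2 * (\<Sum>j\<le>k. w j)"
  proof -
    have "\<bar>\<Sum>j\<le>k. d j * w j\<bar> \<le> (\<Sum>j\<le>k. \<bar>d j * w j\<bar>)" by (rule sum_abs)
    also have "\<dots> \<le> (\<Sum>j\<le>k. 2 * w j)"
    proof (rule sum_mono)
      fix j assume "j \<in> {..k}"
      then have "d j \<in> {-2,0,2}" using Suc.prems(2) by simp
      then show "\<bar>d j * w j\<bar> \<le> 2 * w j" using wnn[of j] by (auto simp: abs_mult)
    qed
    finally show ?thesis by (simp add: sum_distrib_left)
  qed
  have lt: "(\<Sum>j\<le>k. w j) < w (Suc k)" using Suc.prems(1) by simp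
  have dk: "d (Suc k) \<in> {-2,0,2}" using Suc.prems(2) by simp
  have eq: "(\<Sum>j\<le>k. d j * w j) + d (Suc k) * w (Suc k) = 0"
    using Suc.prems(3) by simp
  have d0: "d (Suc k) = 0"
  proof (rule ccontr)
    assume "d (Suc k) \<noteq> 0"
    then have "\<bar>d (Suc k) * w (Suc k)\<bar> = 2 * w (Suc k)"
      using dk wnn[of "Suc k"] by (auto simp: abs_mult)
    moreover have "\<bar>d (Suc k) * w (Suc k)\<bar> = \<bar>\<Sum>j\<le>k. d j * w j\<bar>"
      using eq by (metis abs_minus_cancel add.commute add_eq_0_iff)
    ultimately show False using bnd lt by linarith
  qed
  have s0: "(\<Sum>j\<le>k. d j * w j) = 0" using eq d0 by simp
  have "\<forall>j\<le>k. d j = 0"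
  proof (rule Suc.IH)
    show "\<And>i. i < k \<Longrightarrow> (\<Sum>j\<le>i. w j) < w (Suc i)" using Suc.prems(1) by simp
    show "\<And>j. j \<le> k \<Longrightarrow> d j \<in> {-2,0,2}" using Suc.prems(2) by simp
  qed (rule s0)
  then show ?case using d0 le_Suc_eq by auto
qed

lemma J_bound:
  assumes "3 * m \<le> N + 1"
  shows "J N \<le> 2 ^ (N - m)"
proof -
  define S where "S = {ds :: int list. length ds = N + 1 \<and> set ds \<subseteq> {-1, 1} \<and>
              (\<Sum>i\<le>N. ds ! i * int (N choose i)) = 0}"
  define T where "T = {xs :: int list. set xs \<subseteq> {-1, 1} \<and> length xs = N - m}"
  have inj: "inj_on (drop (m + 1)) S"
  proof (rule inj_onI)
    fix ds es assume ds: "ds \<in> S" and es: "es \<in> S" and de: "drop (m+1) ds = drop (m+1) es"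
    define d where "d j = ds ! j - es ! j" for j
    have len: "length ds = N + 1" "length es = N + 1" using ds es by (auto simp: S_def)
    have hi: "ds ! j = es ! j" if "m < j" "j \<le> N" for j
    proof -
      have "drop (m+1) ds ! (j - (m+1)) = drop (m+1) es ! (j - (m+1))" using de by simp
      then show ?thesis using that len by simp
    qed
    have pm: "ds ! j \<in> {-1,1}" "es ! j \<in> {-1,1}" if "j \<le> N" for j
    proof -
      have "ds ! j \<in> set ds" "es ! j \<in> set es" using len that by simp_all
      then show "ds ! j \<in> {-1,1}" "es ! j \<in> {-1,1}" using ds es by (auto simp: S_def)
    qed
    have dset: "d j \<in> {-2,0,2}" if "j \<le> N" for j
      using pm[OF that] by (auto simp: d_def)
    have sum0: "(\<Sum>j\<le>N. d j * int (N choose j)) = 0"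
      using ds es by (simp add: S_def d_def left_diff_distrib sum_subtractf)
    have split: "(\<Sum>j\<le>N. d j * int (N choose j)) =
       (\<Sum>j\<le>m. d j * int (N choose j)) + (\<Sum>j\<in>{m<..N}. d j * int (N choose j))"
    proof (cases "m \<le> N")
      case True
      have "{..N} = {..m} \<union> {m<..N}" using True by auto
      then show ?thesis by (simp only:) (rule sum.union_disjoint, auto)
    next
      case False
      then show ?thesis using assms by simp
    qed
    have "(\<Sum>j\<in>{m<..N}. d j * int (N choose j)) = 0"
      by (rule sum.neutral) (auto simp: d_def hi)
    then have sm: "(\<Sum>j\<le>m. d j * int (N choose j)) = 0" using sum0 split by simp
    have mN: "m \<le> N" using assms by linarith
    have "\<forall>j\<le>m. d j = 0"
    proof (rule cancel[where w = "\<lambda>j. int (N choose j)"])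
      show "0 < int (N choose 0)" by simp
      show "\<And>j. 0 \<le> int (N choose j)" by simp
      show "\<And>i. i < m \<Longrightarrow> (\<Sum>j\<le>i. int (N choose j)) < int (N choose Suc i)"
        by (rule superinc) (use assms in linarith)
      show "\<And>j. j \<le> m \<Longrightarrow> d j \<in> {-2,0,2}" using dset mN by simp
      show "(\<Sum>j\<le>m. d j * int (N choose j)) = 0" by (rule sm)
    qed
    then have "ds ! j = es ! j" if "j \<le> N" for j
      using hi[of j] that by (cases "j \<le> m") (auto simp: d_def)
    then show "ds = es" using len by (intro nth_equalityI) auto
  qed
  have img: "drop (m + 1) ` S \<subseteq> T"
    by (auto simp: S_def T_def dest: in_set_dropD)
  have fT: "finite T" "card T = 2 ^ (N - m)"
  proof -
    have "card T = card {-1,1::int} ^ (N - m)"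
      unfolding T_def by (rule card_lists_length_eq) simp
    then show "card T = 2 ^ (N - m)" by (simp add: numeral_2_eq_2)
    show "finite T" unfolding T_def by (rule finite_lists_length_eq) simp
  qed
  have "card S \<le> card T" by (rule card_inj_on_le[OF inj img fT(1)])
  then show ?thesis using fT by (simp add: J_def S_def)
qed

theorem theorem5:
  shows "\<exists>n0\<ge>3. \<forall>n\<ge>n0.
    real (J (2 ^ n)) \<le> 0.3258 * 2 powr (3 * 2 ^ (n - 2) - (real n - 3) / 2)"
proof (intro exI[of _ 7] conjI allI impI)
  fix n :: nat assume n: "7 \<le> n"
  define q where "q = n - 2"
  have nq: "n = q + 2" using n by (simp add: q_def)
  have q5: "5 \<le> q" using n by (simp add: q_def)
  have big: "3 * q + 6 \<le> 2 ^ q"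
    using q5
  proof (induction q rule: dec_induct)
    case base then show ?case by simp
  next
    case (step k) then show ?case by simp
  qed
  define m where "m = 2 ^ q + n"
  have N: "(2::nat) ^ n = 4 * 2 ^ q" by (simp add: nq power_add)
  have cond: "3 * m \<le> 2 ^ n + 1" using big by (simp add: m_def N nq)
  have Nm: "2 ^ n - m = 3 * 2 ^ q - n" using big by (simp add: m_def N nq)
  have J1: "J (2 ^ n) \<le> 2 ^ (3 * 2 ^ q - n)" using J_bound[OF cond] Nm by simp
  have "real (J (2 ^ n)) \<le> 2 powr (real (3 * 2 ^ q - n))"
    using J1 by (simp add: powr_realpow)
  also have "real (3 * 2 ^ q - n) = 3 * 2 ^ q - real n"
    using big by (simp add: nq of_nat_diff)
  also have "2 powr (3 * 2 ^ q - real n) =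
      2 powr (3 * 2 ^ q - (real n - 3) / 2) * 2 powr (- (real n + 3) / 2)"
  proof -
    have "3 * 2 ^ q - real n = (3 * 2 ^ q - (real n - 3) / 2) + (- (real n + 3) / 2)"
      by (simp add: field_simps)
    then show ?thesis by (simp only: powr_add)
  qed
  also have "\<dots> \<le> 2 powr (3 * 2 ^ q - (real n - 3) / 2) * 0.3258"
  proof (rule mult_left_mono)
    have "2 powr (- (real n + 3) / 2) \<le> 2 powr (-5)"
      using n by (intro powr_mono) auto
    also have "(2::real) powr (-5) = 1/32" by (simp add: powr_minus powr_realpow)
    finally show "2 powr (- (real n + 3) / 2) \<le> (0.3258::real)" by simp
  qed simp
  finally show "real (J (2 ^ n)) \<le> 0.3258 * 2 powr (3 * 2 ^ (n - 2) - (real n - 3) / 2)"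
    by (simp add: q_def mult.commute)
qed simp

end
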